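(* Let $d\ge4$ be an integer and $D=2^d$. Let $X,Y$ be real numbers with $Y>d$, and let $f$ be a real function on $(X,X+Y]$ with continuous derivatives up to order $d$ such that $0<\lambda\le f^{(d)}(x)\le\Lambda$ there. Then \[ \Bigl|\frac1Y\sum_{X<n\le X+Y}e^{2\pi i f(n)}\Bigr|\le C_4\max\Bigl\{\Bigl(\frac{\Lambda}{\lambda}\Bigr)^{4/D}\lambda^{1/(D-2)},\ Y^{-4/D}\lambda^{-1/(D-2)}\Bigr\}, \] where $C_4=2(2AB^3)^{1/4}\le10.016$, with $A=\frac{2}{\sqrt\pi}(1+\sqrt{1+3\pi/8})$ and $B=2+2\sqrt2$.
   Context: The sum runs over integers $n$. *)

theory Defs
  imports "HOL-Analysis.Analysis"
begin

text \<open>f has continuous derivatives up to order d on the set S: there is a family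
  F 0 = f, F 1, ..., F d of functions, each F k continuous on S, with F (k+1) the
  derivative of F k (taken within S, i.e. one-sided at a closed endpoint).\<close>
definition has_cont_derivs_upto :: "nat \<Rightarrow> (nat \<Rightarrow> real \<Rightarrow> real) \<Rightarrow> real set \<Rightarrow> bool" where
  "has_cont_derivs_upto d F S \<longleftrightarrow>
     (\<forall>k\<le>d. continuous_on S (F k)) \<and>
     (\<forall>k<d. \<forall>x\<in>S. (F k has_real_derivative F (Suc k) x) (at x within S))"

definition constA :: real where
  "constA = 2 / sqrt pi * (1 + sqrt (1 + 3 * pi / 8))"

definition constB :: real where
  "constB = 2 + 2 * sqrt 2"

definition constC4 :: real where
  "constC4 = 2 * (2 * constA * constB ^ 3) powr (1/4)"

end

theory Submission
  imports Defs "HOL-Analysis.Analysis"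
begin

lemma abel_aux:
  fixes t :: "nat \<Rightarrow> real" and w :: "nat \<Rightarrow> complex"
  assumes dec: "\<And>j. Suc j < L \<Longrightarrow> t (Suc j) \<le> t j"
    and w1: "\<And>j. norm (w j) \<le> 1" and L: "L \<ge> 1"
  shows "norm ((\<Sum>j<L. of_real (t j) * (w (Suc j) - w j)) + of_real (t 0) * w 0 - of_real (t (L - 1)) * w L)
         \<le> t 0 - t (L - 1)"
  using L dec
proof (induction L rule: dec_induct)
  case base
  then show ?case by (simp add: algebra_simps)
next
  case (step L)
  have IH: "norm ((\<Sum>j<L. of_real (t j) * (w (Suc j) - w j)) + of_real (t 0) * w 0 - of_real (t (L - 1)) * w L)
         \<le> t 0 - t (L - 1)" using step by auto
  have tdec: "t L \<le> t (L - 1)" using step(4)[of "L-1"] step(1) by auto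
  have eq: "(\<Sum>j<Suc L. of_real (t j) * (w (Suc j) - w j)) + of_real (t 0) * w 0 - of_real (t L) * w (Suc L)
     = ((\<Sum>j<L. of_real (t j) * (w (Suc j) - w j)) + of_real (t 0) * w 0 - of_real (t (L - 1)) * w L)
       + of_real (t (L - 1) - t L) * w L"
    by (simp add: algebra_simps)
  have "norm (of_real (t (L - 1) - t L) * w L) \<le> t (L - 1) - t L"
    unfolding norm_mult norm_of_real using w1[of L] tdec by (simp add: mult_left_le)
  then show ?case unfolding diff_Suc_1 eq using IH norm_triangle_ineq[of "(\<Sum>j<L. of_real (t j) * (w (Suc j) - w j)) + of_real (t 0) * w 0 - of_real (t (L - 1)) * w L" "of_real (t (L - 1) - t L) * w L"]
    by linarith
qed

lemma abs_mult_le1: "\<bar>a::real\<bar> \<le> T \<Longrightarrow> 0 \<le> b \<Longrightarrow> b \<le> 1 \<Longrightarrow> \<bar>a\<bar> * b \<le> T"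
  using mult_left_le[of b "\<bar>a\<bar>"] by simp

lemma abel_bound:
  fixes t :: "nat \<Rightarrow> real" and w :: "nat \<Rightarrow> complex"
  assumes dec: "\<And>j. Suc j < L \<Longrightarrow> t (Suc j) \<le> t j"
    and w1: "\<And>j. norm (w j) \<le> 1" and tb: "\<And>j. j < L \<Longrightarrow> \<bar>t j\<bar> \<le> T" and T0: "0 \<le> T"
  shows "norm (\<Sum>j<L. of_real (t j) * (w (Suc j) - w j)) \<le> 4 * T"
proof (cases "L = 0")
  case True
  then show ?thesis using T0 by simp
next
  case False
  then have L: "L \<ge> 1" by simp
  have A: "norm ((\<Sum>j<L. of_real (t j) * (w (Suc j) - w j)) + of_real (t 0) * w 0 - of_real (t (L - 1)) * w L)
         \<le> t 0 - t (L - 1)" apply (rule abel_aux) using dec w1 L by auto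
  have B: "norm (of_real (t 0) * w 0) \<le> T"
    unfolding norm_mult norm_of_real apply (rule abs_mult_le1) using tb[of 0] w1[of 0] L by auto
  have C: "norm (of_real (t (L-1)) * w L) \<le> T"
    unfolding norm_mult norm_of_real apply (rule abs_mult_le1) using tb[of "L-1"] w1[of L] L by auto
  have D: "t 0 - t (L - 1) \<le> 2 * T" using tb[of 0] tb[of "L-1"] L by auto
  have "norm (\<Sum>j<L. of_real (t j) * (w (Suc j) - w j)) \<le>
     norm ((\<Sum>j<L. of_real (t j) * (w (Suc j) - w j)) + of_real (t 0) * w 0 - of_real (t (L - 1)) * w L)
     + norm (of_real (t 0) * w 0) + norm (of_real (t (L-1)) * w L)"
  proof -
    let ?S = "(\<Sum>j<L. of_real (t j) * (w (Suc j) - w j)) :: complex"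
    let ?a = "of_real (t 0) * w 0" and ?b = "of_real (t (L-1)) * w L"
    have "?S = (?S + ?a - ?b) - ?a + ?b" by simp
    then have "norm ?S = norm ((?S + ?a - ?b) - ?a + ?b)" by (rule arg_cong)
    then have "norm ?S \<le> norm ((?S + ?a - ?b) - ?a) + norm ?b"
      using norm_triangle_ineq[of "(?S + ?a - ?b) - ?a" ?b] by linarith
    moreover have "norm ((?S + ?a - ?b) - ?a) \<le> norm (?S + ?a - ?b) + norm ?a" by (rule norm_triangle_ineq4)
    ultimately show ?thesis by linarith
  qed
  then show ?thesis using A B C D by linarith
qed

lemma cis_step_identity:
  fixes D :: real
  assumes "sin (pi * D) \<noteq> 0"
  shows "(- 1/2 - \<i> / 2 * of_real (cot (pi * D))) * (cis (2 * pi * D) - 1) = 1"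
proof -
  define th where "th = pi * D"
  have e: "2 * pi * D = 2 * th" by (simp add: th_def)
  have s: "sin th \<noteq> 0" using assms by (simp add: th_def)
  have sc: "sin th * sin th + cos th * cos th = 1" using sin_cos_squared_add[of th] by (simp add: power2_eq_square)
  have c2: "cis (2 * th) - 1 = Complex (- 2 * (sin th * sin th)) (2 * sin th * cos th)"
    using sc by (simp add: complex_eq_iff sin_double cos_double power2_eq_square)
  have "(- 1/2 - \<i> / 2 * of_real (cos th / sin th)) * (cis (2 * th) - 1) = 1"
  proof -
    have k: "cos th * (cos th * (sin th * 2)) + sin th * (sin th * (sin th * 2)) = sin th * 2"
      using sc by algebra
    show ?thesis unfolding c2 using s by (simp add: complex_eq_iff field_simps) (rule k[symmetric])
  qed
  then show ?thesis unfolding e cot_def th_def .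
qed

lemma cot_antimono:
  assumes "0 < x" "x \<le> y" "y < pi"
  shows "cot y \<le> cot x"
proof -
  have "\<exists>d. DERIV cot z :> d \<and> d \<le> 0" if "x \<le> z" "z \<le> y" for z
  proof -
    have "sin z > 0" using that assms by (intro sin_gt_zero) auto
    then show ?thesis by (intro exI[of _ "-inverse ((sin z)\<^sup>2)"]) auto
  qed
  then show ?thesis using DERIV_nonpos_imp_nonincreasing[of x y cot] assms by auto
qed

lemma cot_pi_minus: "cot (pi - x) = - cot x"
  by (simp add: cot_def)

lemma x_cos_le_sin:
  assumes "0 \<le> x" "x \<le> pi"
  shows "x * cos x \<le> sin x"
proof -
  have "\<exists>d. DERIV (\<lambda>z. sin z - z * cos z) z :> d \<and> d \<ge> 0" if "0 \<le> z" "z \<le> x" for z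
  proof -
    have "DERIV (\<lambda>z. sin z - z * cos z) z :> cos z - (1 * cos z + z * (- sin z))"
      by (auto intro!: derivative_eq_intros)
    moreover have "z * sin z \<ge> 0" using that assms by (simp add: sin_ge_zero)
    ultimately show ?thesis by (intro exI[of _ "cos z - (1 * cos z + z * (- sin z))"]) auto
  qed
  from DERIV_nonneg_imp_nondecreasing[OF assms(1) this] show ?thesis by simp
qed

lemma cot_le_inv:
  assumes "0 < x" "x < pi"
  shows "cot x \<le> 1 / x"
proof -
  have "sin x > 0" using assms by (intro sin_gt_zero) auto
  then show ?thesis using x_cos_le_sin[of x] assms unfolding cot_def
    by (simp add: field_simps)
qed

lemma cis_shift_int: "cis (2 * pi * (D - real_of_int m)) = cis (2 * pi * D)"
proof -
  have "cis (2 * pi * (D - real_of_int m)) = cis (2 * pi * D) * cis (- (2 * pi * real_of_int m))"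
    by (simp add: cis_mult algebra_simps)
  also have "cis (- (2 * pi * real_of_int m)) = 1"
    by (simp add: cis.ctr complex_eq_iff cos_int_2pin sin_int_2pin)
  finally show ?thesis by simp
qed

lemma kusmin_landau_nat:
  fixes G :: "nat \<Rightarrow> real" and m :: int and \<delta> :: real and L :: nat
  assumes d0: "0 < \<delta>" and d1: "\<delta> < 1/2"
    and rng: "\<And>j. j < L \<Longrightarrow> m + \<delta> \<le> G (Suc j) - G j \<and> G (Suc j) - G j \<le> m + 1 - \<delta>"
    and mono: "\<And>j. Suc j < L \<Longrightarrow> G (Suc j) - G j \<le> G (Suc (Suc j)) - G (Suc j)"
  shows "norm (\<Sum>j\<le>L. cis (2 * pi * G j)) \<le> 2 + 2 * cot (pi * \<delta>)"
proof -
  define w where "w j = cis (2 * pi * G j)" for j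
  define x where "x j = G (Suc j) - G j - m" for j
  define t where "t j = cot (pi * x j)" for j
  define T where "T = cot (pi * \<delta>)"
  have T0: "0 \<le> T" unfolding T_def using d0 d1 by (intro less_imp_le cot_gt_zero) auto
  have xr: "\<delta> \<le> x j \<and> x j \<le> 1 - \<delta>" if "j < L" for j using rng[OF that] unfolding x_def by auto
  have w1: "norm (w j) \<le> 1" for j unfolding w_def by simp
  have step: "w j = (- 1/2 - \<i> / 2 * of_real (t j)) * (w (Suc j) - w j)" if "j < L" for j
  proof -
    have "sin (pi * x j) > 0" using xr[OF that] d0 by (intro sin_gt_zero) auto
    then have id: "(- 1/2 - \<i> / 2 * of_real (t j)) * (cis (2 * pi * x j) - 1) = 1"
      unfolding t_def by (intro cis_step_identity) auto
    have "cis (2 * pi * x j) = cis (2 * pi * (G (Suc j) - G j))"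
      unfolding x_def using cis_shift_int[of "G (Suc j) - G j" m] by simp
    also have "\<dots> = cis (2 * pi * G (Suc j)) / cis (2 * pi * G j)"
      by (simp add: cis_divide algebra_simps)
    finally have "w (Suc j) = w j * cis (2 * pi * x j)" unfolding w_def
      by (simp add: field_simps)
    then have "(- 1/2 - \<i> / 2 * of_real (t j)) * (w (Suc j) - w j)
       = w j * ((- 1/2 - \<i> / 2 * of_real (t j)) * (cis (2 * pi * x j) - 1))"
      by (simp add: algebra_simps)
    then show ?thesis using id by simp
  qed
  have tdec: "t (Suc j) \<le> t j" if "Suc j < L" for j
  proof -
    have "x j \<le> x (Suc j)" using mono[OF that] unfolding x_def by simp
    moreover have "0 < x j" "x (Suc j) < 1" using xr[of j] xr[of "Suc j"] that d0 by auto
    ultimately show ?thesis unfolding t_def by (intro cot_antimono) auto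
  qed
  have tb: "\<bar>t j\<bar> \<le> T" if "j < L" for j
  proof -
    have a: "t j \<le> T" unfolding t_def T_def using xr[OF that] d0
      by (intro cot_antimono) auto
    have "cot (pi * (1 - \<delta>)) \<le> t j" unfolding t_def using xr[OF that] d0 d1
      by (intro cot_antimono) auto
    moreover have "cot (pi * (1 - \<delta>)) = - T" unfolding T_def
      using cot_pi_minus[of "pi * \<delta>"] by (simp add: algebra_simps)
    ultimately show ?thesis using a by auto
  qed
  have A: "norm (\<Sum>j<L. of_real (t j) * (w (Suc j) - w j)) \<le> 4 * T"
    using abel_bound[of L t w T] tdec w1 tb T0 by blast
  have "(\<Sum>j<L. w j) = (\<Sum>j<L. (- 1/2) * (w (Suc j) - w j) - \<i> / 2 * (of_real (t j) * (w (Suc j) - w j)))"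
    by (intro sum.cong refl) (subst step, auto simp: field_simps)
  also have "\<dots> = (- 1/2) * (\<Sum>j<L. (w (Suc j) - w j)) - \<i> / 2 * (\<Sum>j<L. of_real (t j) * (w (Suc j) - w j))"
    by (simp add: sum_subtractf sum_distrib_left sum_divide_distrib[symmetric] sum_negf)
  also have "(\<Sum>j<L. (w (Suc j) - w j)) = w L - w 0"
    by (rule sum_lessThan_telescope)
  finally have E: "(\<Sum>j<L. w j) = (- 1/2) * (w L - w 0) - \<i> / 2 * (\<Sum>j<L. of_real (t j) * (w (Suc j) - w j))" .
  have n1: "norm ((- 1/2) * (w L - w 0)) \<le> 1"
  proof -
    have "norm (w L - w 0) \<le> 2" using norm_triangle_ineq4[of "w L" "w 0"] w1[of L] w1[of 0] by linarith
    then show ?thesis by (simp add: norm_mult)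
  qed
  have n2: "norm (\<i> / 2 * (\<Sum>j<L. of_real (t j) * (w (Suc j) - w j))) \<le> 2 * T"
    using A by (simp add: norm_mult norm_divide)
  have "norm (\<Sum>j<L. w j) \<le> 1 + 2 * T"
    unfolding E using norm_triangle_ineq4[of "(- 1/2) * (w L - w 0)" "\<i> / 2 * (\<Sum>j<L. of_real (t j) * (w (Suc j) - w j))"] n1 n2
    by linarith
  moreover have "(\<Sum>j\<le>L. w j) = (\<Sum>j<L. w j) + w L"
    by (simp add: lessThan_Suc_atMost[symmetric])
  ultimately have "norm (\<Sum>j\<le>L. w j) \<le> 2 + 2 * T"
    using norm_triangle_ineq[of "\<Sum>j<L. w j" "w L"] w1[of L] by simp
  then show ?thesis unfolding w_def T_def .
qed

lemma hcd_deriv_at: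
  assumes H: "has_cont_derivs_upto d F {X<..X+Y}" and k: "k < d" and z: "X < z" "z < X + Y"
  shows "(F k has_real_derivative F (Suc k) z) (at z)"
proof -
  have "z \<in> interior {X<..X+Y}"
  proof -
    have "z \<in> {X<..<X+Y}" using z by auto
    moreover have "{X<..<X+Y} \<subseteq> {X<..X+Y}" by auto
    ultimately show ?thesis using interior_maximal[of "{X<..<X+Y}" "{X<..X+Y}"] by auto
  qed
  moreover have "(F k has_real_derivative F (Suc k) z) (at z within {X<..X+Y})"
    using H k z unfolding has_cont_derivs_upto_def by auto
  ultimately show ?thesis using at_within_interior by metis
qed

lemma hcd_mvt:
  assumes H: "has_cont_derivs_upto d F {X<..X+Y}" and k: "k < d"
    and xy: "X < x" "x < y" "y \<le> X + Y"
  shows "\<exists>z. x < z \<and> z < y \<and> F k y - F k x = (y - x) * F (Suc k) z"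
proof -
  have sub: "{x..y} \<subseteq> {X<..X+Y}" using xy by auto
  have c: "continuous_on {x..y} (F k)"
    using H k unfolding has_cont_derivs_upto_def
    by (meson continuous_on_subset sub less_imp_le_nat)
  have "F k differentiable (at z)" if "x < z" "z < y" for z
    using hcd_deriv_at[OF H k, of z] that xy real_differentiable_def by force
  from MVT[OF xy(2) c this] obtain l z where lz: "x < z" "z < y" "DERIV (F k) z :> l" "F k y - F k x = (y - x) * l"
    by blast
  have "DERIV (F k) z :> F (Suc k) z" using hcd_deriv_at[OF H k, of z] lz xy by auto
  then have "l = F (Suc k) z" using DERIV_unique lz(3) by blast
  then show ?thesis using lz by blast
qed

lemma card_int_diam:
  fixes A :: "int set"
  assumes fin: "finite A" and D: "\<And>a b. a \<in> A \<Longrightarrow> b \<in> A \<Longrightarrow> real_of_int (b - a) \<le> D" and D0: "0 \<le> D"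
  shows "real (card A) \<le> D + 1"
proof (cases "A = {}")
  case True then show ?thesis using D0 by simp
next
  case False
  define a0 where "a0 = Min A"
  have a0A: "a0 \<in> A" unfolding a0_def using fin False by simp
  have sub: "A \<subseteq> {a0..a0 + floor D}"
  proof
    fix b assume b: "b \<in> A"
    have "a0 \<le> b" unfolding a0_def using fin b by simp
    moreover have "real_of_int (b - a0) \<le> D" using D[OF a0A b] .
    then have "b - a0 \<le> floor D" by linarith
    ultimately show "b \<in> {a0..a0 + floor D}" by auto
  qed
  have "card A \<le> card {a0..a0 + floor D}" using card_mono[OF _ sub] by simp
  also have "card {a0..a0 + floor D} = nat (floor D + 1)" by simp
  finally have "real (card A) \<le> real (nat (floor D + 1))" by linarith
  also have "\<dots> = real_of_int (floor D + 1)" using D0 by simp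
  also have "\<dots> \<le> D + 1" by linarith
  finally show ?thesis .
qed

lemma finite_int_Ioc: "finite {n::int. X < real_of_int n \<and> real_of_int n \<le> Z}"
proof -
  have "{n::int. X < real_of_int n \<and> real_of_int n \<le> Z} \<subseteq> {floor X .. ceiling Z}"
    by (auto, linarith+)
  then show ?thesis using finite_subset by blast
qed

lemma card_int_Ioc:
  assumes "0 \<le> Y"
  shows "real (card {n::int. X < real_of_int n \<and> real_of_int n \<le> X + Y}) \<le> Y + 1"
  by (rule card_int_diam[OF finite_int_Ioc _ assms]) auto

lemma norm_sum_cis_le_card:
  "norm (\<Sum>n\<in>A. cis (f n)) \<le> real (card A)"
proof -
  have "norm (\<Sum>n\<in>A. cis (f n)) \<le> (\<Sum>n\<in>A. norm (cis (f n)))" by (rule norm_sum)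
  also have "\<dots> = real (card A)" by simp
  finally show ?thesis .
qed

lemma sum_int_interval_nat:
  fixes f :: "int \<Rightarrow> 'a::comm_monoid_add"
  assumes "a \<le> b"
  shows "sum f {a..b} = (\<Sum>j\<le>nat (b - a). f (a + int j))"
proof -
  have inj: "inj_on (\<lambda>j. a + int j) {..nat (b - a)}" by (auto simp: inj_on_def)
  have im: "(\<lambda>j. a + int j) ` {..nat (b - a)} = {a..b}"
  proof
    show "(\<lambda>j. a + int j) ` {..nat (b - a)} \<subseteq> {a..b}" using assms by auto
    show "{a..b} \<subseteq> (\<lambda>j. a + int j) ` {..nat (b - a)}"
    proof
      fix n assume n: "n \<in> {a..b}"
      then have "n = a + int (nat (n - a))" "nat (n - a) \<in> {..nat (b - a)}" by auto
      then show "n \<in> (\<lambda>j. a + int j) ` {..nat (b - a)}" by blast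
    qed
  qed
  show ?thesis using sum.reindex[OF inj, of f] im by simp
qed

lemma second_deriv_test_raw:
  fixes X Y lam Lam :: real and F :: "nat \<Rightarrow> real \<Rightarrow> real"
  assumes H: "has_cont_derivs_upto 2 F {X<..X+Y}" and Y1: "1 \<le> Y" and lam: "0 < lam"
    and bd: "\<And>x. x \<in> {X<..X+Y} \<Longrightarrow> lam \<le> F 2 x \<and> F 2 x \<le> Lam"
  shows "norm (\<Sum>n\<in>{n::int. X < of_int n \<and> of_int n \<le> X + Y}. cis (2 * pi * F 0 (of_int n)))
           \<le> 8 * (Y * Lam / sqrt lam + 1 / sqrt lam)"
proof -
  define I where "I = {n::int. X < of_int n \<and> of_int n \<le> X + Y}"
  have finI: "finite I" unfolding I_def by (rule finite_int_Ioc)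
  have cardI: "real (card I) \<le> Y + 1" unfolding I_def using Y1 by (intro card_int_Ioc) auto
  have lL: "lam \<le> Lam" using bd[of "X+Y"] Y1 by auto
  have mono1: "lam * (y - x) \<le> F 1 y - F 1 x \<and> F 1 y - F 1 x \<le> Lam * (y - x)"
    if hx: "X < x" "x \<le> y" "y \<le> X + Y" for x y
  proof (cases "x = y")
    case True then show ?thesis by simp
  next
    case False
    then have xy: "x < y" using hx by simp
    obtain z where z: "x < z" "z < y" "F 1 y - F 1 x = (y - x) * F 2 z"
      using hcd_mvt[OF H _ hx(1) xy hx(3), of 1] by (auto simp: numeral_2_eq_2)
    have "lam \<le> F 2 z \<and> F 2 z \<le> Lam" using bd[of z] z hx by auto
    then show ?thesis using z xy by (simp add: mult_right_mono mult.commute)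
  qed
  have F1mono: "F 1 x \<le> F 1 y" if "X < x" "x \<le> y" "y \<le> X + Y" for x y
    using mono1[OF that] lam that(2) by (smt (verit) mult_nonneg_nonneg)
  have D0: "(y - x) * F 1 x \<le> F 0 y - F 0 x \<and> F 0 y - F 0 x \<le> (y - x) * F 1 y"
    if hx: "X < x" "x < y" "y \<le> X + Y" for x y
  proof -
    obtain z where z: "x < z" "z < y" "F 0 y - F 0 x = (y - x) * F 1 z"
      using hcd_mvt[OF H _ hx, of 0] by auto
    have "F 1 x \<le> F 1 z" "F 1 z \<le> F 1 y" using F1mono z hx by auto
    then show ?thesis using z hx by (simp add: mult_left_mono)
  qed
  show ?thesis
  proof (cases "lam \<ge> 1/16")
    case True
    have s: "sqrt lam \<ge> 1/4"
      using True real_sqrt_le_mono[of "1/16" lam] by (simp add: real_sqrt_divide)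
    have "Lam / sqrt lam \<ge> lam / sqrt lam" using lL lam by (simp add: divide_right_mono)
    also have "lam / sqrt lam = sqrt lam" using lam by (simp add: real_div_sqrt)
    finally have "Lam / sqrt lam \<ge> 1/4" using s by linarith
    then have "Y * (Lam / sqrt lam) \<ge> Y * (1/4)" using Y1 by (intro mult_left_mono) auto
    moreover have "1 / sqrt lam \<ge> 0" using lam by simp
    ultimately have h: "Y * Lam / sqrt lam \<ge> Y / 4" "1 / sqrt lam \<ge> 0" by auto
    have "8 * (Y * Lam / sqrt lam + 1 / sqrt lam) \<ge> 2 * Y"
      using h by (simp only: distrib_left)
    moreover have "norm (\<Sum>n\<in>I. cis (2 * pi * F 0 (of_int n))) \<le> real (card I)"
      by (rule norm_sum_cis_le_card)
    ultimately show ?thesis using cardI Y1 unfolding I_def by linarith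
  next
    case False
    then have lam16: "lam < 1/16" by simp
    define d where "d = sqrt lam"
    have d0: "0 < d" unfolding d_def using lam by simp
    have d4: "d < 1/4" unfolding d_def using lam16 real_sqrt_less_mono[of lam "1/16"]
      by (simp add: real_sqrt_divide)
    have dd: "d * d = lam" unfolding d_def using lam by simp
    define phi where "phi n = F 1 (of_int n)" for n :: int
    define cls where "cls n = floor (phi n + d)" for n
    have inI: "X < of_int n" "of_int n \<le> X + Y" if "n \<in> I" for n using that unfolding I_def by auto
    have phimono: "phi n1 \<le> phi n2" if "n1 \<in> I" "n2 \<in> I" "n1 \<le> n2" for n1 n2
      unfolding phi_def using F1mono inI that by auto
    have clsmono: "cls n1 \<le> cls n2" if "n1 \<in> I" "n2 \<in> I" "n1 \<le> n2" for n1 n2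
      unfolding cls_def using phimono[OF that] by (intro floor_mono) auto
    define B where "B = 2 * d / lam + 1 + (2 + 2 * cot (pi * d))"
    have perm: "norm (\<Sum>n\<in>{n\<in>I. cls n = m}. cis (2 * pi * F 0 (of_int n))) \<le> B" for m
    proof -
      define A where "A = {n\<in>I. cls n = m}"
      have finA: "finite A" unfolding A_def using finI by simp
      define Nm where "Nm = A \<inter> {n. phi n < m + d}"
      define Fm where "Fm = A - {n. phi n < m + d}"
      have split: "(\<Sum>n\<in>A. cis (2 * pi * F 0 (of_int n))) =
         (\<Sum>n\<in>Nm. cis (2 * pi * F 0 (of_int n))) + (\<Sum>n\<in>Fm. cis (2 * pi * F 0 (of_int n)))"
        unfolding Nm_def Fm_def by (rule sum.Int_Diff[OF finA])
      have lowA: "m - d \<le> phi n \<and> phi n + d < m + 1" if "n \<in> A" for n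
      proof -
        have "floor (phi n + d) = m" using that unfolding A_def cls_def by auto
        then show ?thesis by linarith
      qed
      have near: "norm (\<Sum>n\<in>Nm. cis (2 * pi * F 0 (of_int n))) \<le> 2 * d / lam + 1"
      proof -
        have "real (card Nm) \<le> 2 * d / lam + 1"
        proof (rule card_int_diam)
          show "finite Nm" unfolding Nm_def using finA by simp
          show "0 \<le> 2 * d / lam" using d0 lam by simp
          fix a b assume a: "a \<in> Nm" and b: "b \<in> Nm"
          show "real_of_int (b - a) \<le> 2 * d / lam"
          proof (cases "a \<le> b")
            case False
            then have "real_of_int (b - a) \<le> 0" by simp
            moreover have "0 \<le> 2 * d / lam" using d0 lam by simp
            ultimately show ?thesis by linarith
          next
            case True
            have aI: "a \<in> I" and bI: "b \<in> I" using a b unfolding Nm_def A_def by auto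
            have "lam * (of_int b - of_int a) \<le> phi b - phi a"
              unfolding phi_def using mono1[of "of_int a" "of_int b"] inI[OF aI] inI[OF bI] True by auto
            also have "\<dots> < 2 * d" using lowA[of a] lowA[of b] a b unfolding Nm_def by auto
            finally have "lam * real_of_int (b - a) < 2 * d" by simp
            then show ?thesis using lam by (simp add: field_simps)
          qed
        qed
        then show ?thesis using norm_sum_cis_le_card[of _ Nm] by (meson order_trans)
      qed
      have far: "norm (\<Sum>n\<in>Fm. cis (2 * pi * F 0 (of_int n))) \<le> 2 + 2 * cot (pi * d)"
      proof (cases "Fm = {}")
        case True
        have "0 \<le> cot (pi * d)" using d0 d4 by (intro less_imp_le cot_gt_zero) auto
        then show ?thesis using True by simp
      next
        case False
        have finF: "finite Fm" unfolding Fm_def using finA by simp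
        define a where "a = Min Fm"
        define b where "b = Max Fm"
        have aF: "a \<in> Fm" and bF: "b \<in> Fm" unfolding a_def b_def using finF False by auto
        have ab: "a \<le> b" unfolding a_def using finF bF by simp
        have FmI: "Fm \<subseteq> I" unfolding Fm_def A_def by auto
        have Fmc: "n \<in> Fm" if "a \<le> n" "n \<le> b" for n
        proof -
          have aI: "a \<in> I" and bI: "b \<in> I" using aF bF FmI by auto
          have nI: "n \<in> I" using inI[OF aI] inI[OF bI] that unfolding I_def by auto
          have "cls a \<le> cls n" "cls n \<le> cls b" using clsmono aI bI nI that by auto
          moreover have "cls a = m" "cls b = m" using aF bF unfolding Fm_def A_def by auto
          moreover have "phi a \<le> phi n" using phimono aI nI that by auto
          moreover have "\<not> phi a < m + d" using aF unfolding Fm_def by auto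
          ultimately show ?thesis using nI unfolding Fm_def A_def by auto
        qed
        have Fmeq: "Fm = {a..b}"
        proof
          show "Fm \<subseteq> {a..b}" unfolding a_def b_def using finF by auto
          show "{a..b} \<subseteq> Fm" using Fmc by auto
        qed
        define L where "L = nat (b - a)"
        define G where "G j = F 0 (of_int (a + int j))" for j
        have GF: "a + int j \<in> Fm" if "j \<le> L" for j using Fmc[of "a + int j"] that ab unfolding L_def by linarith
        have Dbd: "phi (a + int j) \<le> G (Suc j) - G j \<and> G (Suc j) - G j \<le> phi (a + int (Suc j))"
          if "j < L" for j
        proof -
          have n0: "a + int j \<in> I" "a + int (Suc j) \<in> I" using GF[of j] GF[of "Suc j"] that FmI by auto
          have e: "real_of_int (a + int (Suc j)) = real_of_int (a + int j) + 1" by simp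
          show ?thesis using D0[of "of_int (a + int j)" "of_int (a + int (Suc j))"] inI[OF n0(1)] inI[OF n0(2)]
            unfolding G_def phi_def e by simp
        qed
        have "norm (\<Sum>j\<le>L. cis (2 * pi * G j)) \<le> 2 + 2 * cot (pi * d)"
        proof (rule kusmin_landau_nat[where m = m])
          show "0 < d" by (rule d0)
          show "d < 1/2" using d4 by simp
          fix j assume j: "j < L"
          have f1: "a + int j \<in> Fm" "a + int (Suc j) \<in> Fm" using GF[of j] GF[of "Suc j"] j by auto
          have "\<not> phi (a + int j) < m + d" using f1(1) unfolding Fm_def by auto
          moreover have "phi (a + int (Suc j)) + d < m + 1" using lowA f1(2) unfolding Fm_def by auto
          ultimately show "m + d \<le> G (Suc j) - G j \<and> G (Suc j) - G j \<le> m + 1 - d"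
            using Dbd[OF j] by linarith
        next
          fix j assume j: "Suc j < L"
          show "G (Suc j) - G j \<le> G (Suc (Suc j)) - G (Suc j)"
            using Dbd[of j] Dbd[of "Suc j"] j by auto
        qed
        moreover have "(\<Sum>n\<in>Fm. cis (2 * pi * F 0 (of_int n))) = (\<Sum>j\<le>L. cis (2 * pi * G j))"
          unfolding Fmeq L_def G_def by (rule sum_int_interval_nat[OF ab])
        ultimately show ?thesis by simp
      qed
      show ?thesis unfolding A_def[symmetric] split B_def
        using norm_triangle_ineq[of "\<Sum>n\<in>Nm. cis (2 * pi * F 0 (of_int n))" "\<Sum>n\<in>Fm. cis (2 * pi * F 0 (of_int n))"] near far
        by linarith
    qed
    have cardcls: "real (card (cls ` I)) \<le> Lam * Y + 1 + 1"
    proof (rule card_int_diam)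
      show "finite (cls ` I)" using finI by simp
      show "0 \<le> Lam * Y + 1" using lL lam Y1 by simp
      fix c1 c2 assume c1: "c1 \<in> cls ` I" and c2: "c2 \<in> cls ` I"
      then obtain n1 n2 where n: "n1 \<in> I" "n2 \<in> I" "c1 = cls n1" "c2 = cls n2" by auto
      show "real_of_int (c2 - c1) \<le> Lam * Y + 1"
      proof (cases "n1 \<le> n2")
        case False
        then have "cls n2 \<le> cls n1" using clsmono n by auto
        then have "real_of_int (c2 - c1) \<le> 0" using n by simp
        moreover have "0 \<le> Lam * Y" using lL lam Y1 by simp
        ultimately show ?thesis by linarith
      next
        case True
        have "phi n2 - phi n1 \<le> Lam * (of_int n2 - of_int n1)"
          unfolding phi_def using mono1[of "of_int n1" "of_int n2"] inI[OF n(1)] inI[OF n(2)] True by auto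
        also have "\<dots> \<le> Lam * Y"
          using inI[OF n(1)] inI[OF n(2)] lL lam by (intro mult_left_mono) auto
        finally have "phi n2 - phi n1 \<le> Lam * Y" .
        moreover have "real_of_int (cls n2 - cls n1) \<le> phi n2 - phi n1 + 1"
          unfolding cls_def by linarith
        ultimately show ?thesis using n by simp
      qed
    qed
    have "(\<Sum>n\<in>I. cis (2 * pi * F 0 (of_int n))) =
        (\<Sum>m\<in>cls ` I. \<Sum>n\<in>{n\<in>I. cls n = m}. cis (2 * pi * F 0 (of_int n)))"
      by (rule sum.image_gen[OF finI])
    then have "norm (\<Sum>n\<in>I. cis (2 * pi * F 0 (of_int n))) \<le> (\<Sum>m\<in>cls ` I. B)"
      using sum_norm_le[of "cls ` I" "\<lambda>m. \<Sum>n\<in>{n\<in>I. cls n = m}. cis (2 * pi * F 0 (of_int n))" "\<lambda>_. B"] perm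
      by simp
    also have "\<dots> = real (card (cls ` I)) * B" by simp
    also have "\<dots> \<le> (Lam * Y + 2) * (15 / 4 / d)"
    proof (rule mult_mono)
      show "real (card (cls ` I)) \<le> Lam * Y + 2" using cardcls by simp
      have "cot (pi * d) \<le> 1 / (pi * d)" using d0 d4 pi_gt3 by (intro cot_le_inv) auto
      also have "\<dots> \<le> 1 / (3 * d)" using d0 pi_gt3 by (intro divide_left_mono mult_right_mono) auto
      finally have c: "cot (pi * d) \<le> 1 / (3 * d)" .
      have "2 * d / lam = 2 / d" unfolding dd[symmetric] using d0 by (simp add: field_simps)
      moreover have "(3::real) \<le> 3 / 4 / d" using d0 d4 by (simp add: field_simps)
      ultimately show "B \<le> 15 / 4 / d" unfolding B_def using c d0 by (simp add: field_simps)
      show "0 \<le> Lam * Y + 2" using lL lam Y1 by simp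
      have "0 \<le> cot (pi * d)" using d0 d4 by (intro less_imp_le cot_gt_zero) auto
      then show "0 \<le> B" unfolding B_def using d0 lam by simp
    qed
    also have "\<dots> \<le> 8 * (Y * Lam / sqrt lam + 1 / sqrt lam)"
      unfolding d_def[symmetric] using d0 lL lam Y1 by (simp add: field_simps)
    finally show ?thesis unfolding I_def .
  qed
qed

lemma sum_shift_int:
  fixes g :: "int \<Rightarrow> 'a::comm_monoid_add"
  shows "(\<Sum>m\<in>{a..b}. g (m + c)) = (\<Sum>n\<in>{a+c..b+c}. g n)"
  by (rule sum.reindex_bij_witness[of _ "\<lambda>n. n - c" "\<lambda>m. m + c"]) auto

lemma sum_window:
  fixes g :: "int \<Rightarrow> 'a::comm_monoid_add"
  assumes e: "e \<le> H - 1" and H1: "1 \<le> H" and supp: "\<And>n. n \<notin> {p..q} \<Longrightarrow> g n = 0"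
  shows "(\<Sum>m\<in>{p - int H + 1..q}. g (m + int e)) = (\<Sum>n\<in>{p..q}. g n)"
proof -
  have "(\<Sum>m\<in>{p - int H + 1..q}. g (m + int e)) = (\<Sum>n\<in>{p - int H + 1 + int e..q + int e}. g n)"
    by (rule sum_shift_int)
  also have "\<dots> = (\<Sum>n\<in>{p..q}. g n)"
  proof (rule sum.mono_neutral_right)
    show "finite {p - int H + 1 + int e..q + int e}" by simp
    show "{p..q} \<subseteq> {p - int H + 1 + int e..q + int e}" using e H1 by auto
    show "\<forall>i\<in>{p - int H + 1 + int e..q + int e} - {p..q}. g i = 0" using supp by auto
  qed
  finally show ?thesis .
qed

lemma sum_dist_bound:
  fixes f :: "nat \<Rightarrow> real"
  assumes f0: "\<And>h. 0 \<le> f h" and r: "r < H"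
  shows "(\<Sum>s<H. f (nat \<bar>int r - int s\<bar>)) \<le> f 0 + 2 * (\<Sum>h\<in>{1..<H}. f h)"
proof -
  have split: "{..<H} = {r} \<union> ({s. s < r} \<union> {s. r < s \<and> s < H})" using r by auto
  have A: "(\<Sum>s\<in>{s. s < r}. f (nat \<bar>int r - int s\<bar>)) \<le> (\<Sum>h\<in>{1..<H}. f h)"
  proof -
    have "(\<Sum>s\<in>{s. s < r}. f (nat \<bar>int r - int s\<bar>)) = (\<Sum>s\<in>{s. s < r}. f (r - s))"
      by (intro sum.cong refl) (auto simp: nat_diff_distrib)
    also have "\<dots> = (\<Sum>h\<in>(\<lambda>s. r - s) ` {s. s < r}. f h)"
      by (subst sum.reindex) (auto simp: inj_on_def)
    also have "\<dots> \<le> (\<Sum>h\<in>{1..<H}. f h)"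
      by (rule sum_mono2) (use r f0 in auto)
    finally show ?thesis .
  qed
  have B: "(\<Sum>s\<in>{s. r < s \<and> s < H}. f (nat \<bar>int r - int s\<bar>)) \<le> (\<Sum>h\<in>{1..<H}. f h)"
  proof -
    have "(\<Sum>s\<in>{s. r < s \<and> s < H}. f (nat \<bar>int r - int s\<bar>)) = (\<Sum>s\<in>{s. r < s \<and> s < H}. f (s - r))"
      by (intro sum.cong refl) (auto simp: nat_diff_distrib)
    also have "\<dots> = (\<Sum>h\<in>(\<lambda>s. s - r) ` {s. r < s \<and> s < H}. f h)"
      by (subst sum.reindex) (auto simp: inj_on_def)
    also have "\<dots> \<le> (\<Sum>h\<in>{1..<H}. f h)"
      by (rule sum_mono2) (use r f0 in auto)
    finally show ?thesis .
  qed
  have "(\<Sum>s<H. f (nat \<bar>int r - int s\<bar>)) = f 0 + ((\<Sum>s\<in>{s. s < r}. f (nat \<bar>int r - int s\<bar>)) +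
         (\<Sum>s\<in>{s. r < s \<and> s < H}. f (nat \<bar>int r - int s\<bar>)))"
    unfolding split by (subst sum.union_disjoint; auto)+
  then show ?thesis using A B by linarith
qed

lemma weyl_vdc:
  fixes u :: "int \<Rightarrow> complex" and p q :: int and H :: nat
  assumes H1: "1 \<le> H" and pq: "p \<le> q + 1" and supp: "\<And>n. n \<notin> {p..q} \<Longrightarrow> u n = 0"
  shows "(real H)\<^sup>2 * (norm (\<Sum>n\<in>{p..q}. u n))\<^sup>2 \<le>
     real (nat (q - p + 1) + H - 1) *
       (real H * norm (\<Sum>n\<in>{p..q}. u n * cnj (u n))
        + 2 * real H * (\<Sum>h\<in>{1..<H}. norm (\<Sum>n\<in>{p..q}. u (n + int h) * cnj (u n))))"
proof -
  define C where "C h = (\<Sum>n\<in>{p..q}. u (n + int h) * cnj (u n))" for h :: nat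
  define M0 where "M0 = {p - int H + 1..q}"
  define S where "S = (\<Sum>n\<in>{p..q}. u n)"
  define V where "V m = (\<Sum>r<H. u (m + int r))" for m
  have cardM0: "card M0 = nat (q - p + 1) + H - 1" unfolding M0_def using H1 pq by auto
  have step1: "(\<Sum>m\<in>M0. u (m + int r)) = S" if "r < H" for r
    unfolding M0_def S_def by (rule sum_window) (use that H1 supp in auto)
  have step2: "of_nat H * S = (\<Sum>m\<in>M0. V m)"
  proof -
    have "(\<Sum>m\<in>M0. V m) = (\<Sum>r<H. \<Sum>m\<in>M0. u (m + int r))"
      unfolding V_def by (rule sum.swap)
    also have "\<dots> = (\<Sum>r<H. S)" using step1 by simp
    finally show ?thesis by simp
  qed
  have step3: "(real H * norm S)\<^sup>2 \<le> real (card M0) * (\<Sum>m\<in>M0. (norm (V m))\<^sup>2)"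
  proof -
    have "real H * norm S = norm (\<Sum>m\<in>M0. V m)" using step2[symmetric]
      by (simp add: norm_mult)
    also have "\<dots> \<le> (\<Sum>m\<in>M0. norm (V m))" by (rule norm_sum)
    finally have a: "real H * norm S \<le> (\<Sum>m\<in>M0. norm (V m))" .
    have "(real H * norm S)\<^sup>2 \<le> (\<Sum>m\<in>M0. norm (V m))\<^sup>2"
      using a by (intro power_mono) auto
    also have "\<dots> \<le> (\<Sum>m\<in>M0. (norm (V m))\<^sup>2) * card M0"
      by (rule sum_squared_le_sum_of_squares)
    finally show ?thesis by (simp add: mult.commute)
  qed
  define W where "W r s = (\<Sum>m\<in>M0. u (m + int r) * cnj (u (m + int s)))" for r s :: nat
  have step4: "complex_of_real ((norm (V m))\<^sup>2) = (\<Sum>r<H. \<Sum>s<H. u (m + int r) * cnj (u (m + int s)))" for m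
  proof -
    have "complex_of_real ((norm (V m))\<^sup>2) = V m * cnj (V m)" by (rule complex_norm_square)
    also have "\<dots> = (\<Sum>r<H. \<Sum>s<H. u (m + int r) * cnj (u (m + int s)))"
      unfolding V_def by (simp add: sum_product cnj_sum)
    finally show ?thesis .
  qed
  have step5: "(\<Sum>m\<in>M0. (norm (V m))\<^sup>2) \<le> (\<Sum>r<H. \<Sum>s<H. norm (W r s))"
  proof -
    have "complex_of_real (\<Sum>m\<in>M0. (norm (V m))\<^sup>2) = (\<Sum>r<H. \<Sum>s<H. W r s)"
      unfolding of_real_sum step4 W_def
      by (subst sum.swap, rule sum.cong[OF refl], rule sum.swap)
    then have "norm (complex_of_real (\<Sum>m\<in>M0. (norm (V m))\<^sup>2)) = norm (\<Sum>r<H. \<Sum>s<H. W r s)"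
      by simp
    moreover have "norm (complex_of_real (\<Sum>m\<in>M0. (norm (V m))\<^sup>2)) = (\<Sum>m\<in>M0. (norm (V m))\<^sup>2)"
      unfolding norm_of_real by (simp add: sum_nonneg)
    ultimately have "(\<Sum>m\<in>M0. (norm (V m))\<^sup>2) = norm (\<Sum>r<H. \<Sum>s<H. W r s)" by simp
    also have "\<dots> \<le> (\<Sum>r<H. norm (\<Sum>s<H. W r s))" by (rule norm_sum)
    also have "\<dots> \<le> (\<Sum>r<H. \<Sum>s<H. norm (W r s))" by (intro sum_mono norm_sum)
    finally show ?thesis .
  qed
  have step6: "norm (W r s) = norm (C (nat \<bar>int r - int s\<bar>))" if "r < H" "s < H" for r s
  proof (cases "s \<le> r")
    case True
    have "W r s = (\<Sum>m\<in>M0. (\<lambda>n. u (n + int (r - s)) * cnj (u n)) (m + int s))"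
      unfolding W_def using True by (intro sum.cong refl) (simp add: algebra_simps of_nat_diff)
    also have "\<dots> = C (r - s)" unfolding M0_def C_def
      by (rule sum_window) (use that H1 supp in auto)
    finally show ?thesis using True by (simp add: nat_diff_distrib)
  next
    case False
    have "W r s = (\<Sum>m\<in>M0. (\<lambda>n. u n * cnj (u (n + int (s - r)))) (m + int r))"
      unfolding W_def using False by (intro sum.cong refl) (simp add: algebra_simps of_nat_diff)
    also have "\<dots> = (\<Sum>n\<in>{p..q}. u n * cnj (u (n + int (s - r))))" unfolding M0_def
      by (rule sum_window) (use that H1 supp in auto)
    also have "\<dots> = cnj (C (s - r))" unfolding C_def cnj_sum by (simp add: mult.commute)
    finally show ?thesis using False by (simp add: nat_diff_distrib)
  qed
  have step7: "(\<Sum>r<H. \<Sum>s<H. norm (W r s)) \<le> real H * norm (C 0) + 2 * real H * (\<Sum>h\<in>{1..<H}. norm (C h))"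
  proof -
    have "(\<Sum>r<H. \<Sum>s<H. norm (W r s)) = (\<Sum>r<H. \<Sum>s<H. norm (C (nat \<bar>int r - int s\<bar>)))"
      using step6 by (intro sum.cong refl) auto
    also have "\<dots> \<le> (\<Sum>r<H. norm (C 0) + 2 * (\<Sum>h\<in>{1..<H}. norm (C h)))"
      by (intro sum_mono sum_dist_bound) auto
    also have "\<dots> = real H * norm (C 0) + 2 * real H * (\<Sum>h\<in>{1..<H}. norm (C h))"
      by (simp add: algebra_simps)
    finally show ?thesis .
  qed
  have "(real H)\<^sup>2 * (norm S)\<^sup>2 = (real H * norm S)\<^sup>2" by (simp add: power_mult_distrib)
  also have "\<dots> \<le> real (card M0) * (real H * norm (C 0) + 2 * real H * (\<Sum>h\<in>{1..<H}. norm (C h)))"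
  proof -
    have "(\<Sum>m\<in>M0. (norm (V m))\<^sup>2) \<le> real H * norm (C 0) + 2 * real H * (\<Sum>h\<in>{1..<H}. norm (C h))"
      using step5 step7 by linarith
    then have "real (card M0) * (\<Sum>m\<in>M0. (norm (V m))\<^sup>2) \<le> real (card M0) * (real H * norm (C 0) + 2 * real H * (\<Sum>h\<in>{1..<H}. norm (C h)))"
      by (intro mult_left_mono) auto
    then show ?thesis using step3 by linarith
  qed
  finally show ?thesis unfolding cardM0 S_def C_def by simp
qed

lemma powr_step:
  fixes b h :: real
  assumes b0: "0 \<le> b" and b1: "b < 1" and h1: "1 \<le> h"
  shows "(1 - b) * h powr (- b) \<le> h powr (1 - b) - (h - 1) powr (1 - b)"
proof (cases "h = 1")
  case True
  then show ?thesis using b0 b1 by simp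
next
  case False
  then have h1': "1 < h" using h1 by simp
  have c: "continuous_on {h - 1..h} (\<lambda>t. t powr (1 - b))"
    using h1' by (intro continuous_intros) auto
  have d: "(\<lambda>t. t powr (1 - b)) differentiable (at t)" if "h - 1 < t" "t < h" for t
    using has_real_derivative_powr[of t "1 - b"] that h1' real_differentiable_def by force
  obtain l z where lz: "h - 1 < z" "z < h" "DERIV (\<lambda>t. t powr (1 - b)) z :> l"
    "h powr (1 - b) - (h - 1) powr (1 - b) = (h - (h - 1)) * l"
    using MVT[of "h - 1" h "\<lambda>t. t powr (1 - b)"] c d by auto
  have "DERIV (\<lambda>t. t powr (1 - b)) z :> (1 - b) * z powr (1 - b - 1)"
    using has_real_derivative_powr[of z "1 - b"] lz h1' by auto
  then have l: "l = (1 - b) * z powr (- b)" using DERIV_unique lz(3) by fastforce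
  have "h powr (- b) \<le> z powr (- b)" using lz h1' b0 by (intro powr_mono2') auto
  then have "(1 - b) * h powr (- b) \<le> (1 - b) * z powr (- b)" using b1 by (intro mult_left_mono) auto
  then show ?thesis using lz(4) l by simp
qed

lemma sum_powr_neg_aux:
  fixes b :: real
  assumes b0: "0 \<le> b" and b1: "b < 1"
  shows "(\<Sum>h\<in>{1..<Suc n}. real h powr (- b)) \<le> real n powr (1 - b) / (1 - b)"
proof (induction n)
  case 0
  then show ?case by simp
next
  case (Suc n)
  have "(\<Sum>h\<in>{1..<Suc (Suc n)}. real h powr (- b)) = (\<Sum>h\<in>{1..<Suc n}. real h powr (- b)) + real (Suc n) powr (- b)"
    by simp
  also have "\<dots> \<le> real n powr (1 - b) / (1 - b) + real (Suc n) powr (- b)" using Suc by simp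
  also have "\<dots> \<le> real (Suc n) powr (1 - b) / (1 - b)"
  proof -
    have "(1 - b) * real (Suc n) powr (- b) \<le> real (Suc n) powr (1 - b) - (real (Suc n) - 1) powr (1 - b)"
      using powr_step[OF b0 b1, of "real (Suc n)"] by simp
    then have "real (Suc n) powr (- b) \<le> (real (Suc n) powr (1 - b) - real n powr (1 - b)) / (1 - b)"
      using b1 by (simp add: field_simps)
    then show ?thesis using b1 by (simp add: diff_divide_distrib)
  qed
  finally show ?case .
qed

lemma sum_powr_neg:
  fixes b :: real and H :: nat
  assumes b0: "0 \<le> b" and b1: "b < 1"
  shows "(\<Sum>h\<in>{1..<H}. real h powr (- b)) \<le> real H powr (1 - b) / (1 - b)"
proof (cases H)
  case 0
  then show ?thesis by simp
next
  case (Suc n)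
  have "(\<Sum>h\<in>{1..<H}. real h powr (- b)) \<le> real n powr (1 - b) / (1 - b)"
    using sum_powr_neg_aux[OF b0 b1, of n] Suc by simp
  also have "\<dots> \<le> real H powr (1 - b) / (1 - b)"
    using Suc b1 by (intro divide_right_mono powr_mono2) auto
  finally show ?thesis .
qed

lemma diff_family:
  assumes H: "has_cont_derivs_upto k F {X<..X+Y}" and h: "0 \<le> h" "h < Y"
  shows "has_cont_derivs_upto (k - 1) (\<lambda>j x. F j (x + h) - F j x) {X<..X + (Y - h)}"
proof -
  let ?S = "{X<..X+Y}" and ?T = "{X<..X + (Y - h)}"
  have TS: "?T \<subseteq> ?S" using h by auto
  have im: "(\<lambda>x. x + h) ` ?T \<subseteq> ?S" using h by auto
  have cont: "continuous_on ?T (\<lambda>x. F j (x + h) - F j x)" if "j \<le> k - 1" for j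
  proof -
    have cS: "continuous_on ?S (F j)" using H that unfolding has_cont_derivs_upto_def
      by (cases k) auto
    have "continuous_on ?T (\<lambda>x. F j (x + h))"
      by (rule continuous_on_compose2[OF cS _ im]) (intro continuous_intros)
    moreover have "continuous_on ?T (F j)" using continuous_on_subset[OF cS TS] .
    ultimately show ?thesis by (intro continuous_on_diff)
  qed
  have der: "((\<lambda>x. F j (x + h) - F j x) has_real_derivative (F (Suc j) (x + h) - F (Suc j) x)) (at x within ?T)"
    if j: "j < k - 1" and x: "x \<in> ?T" for j x
  proof -
    have jk: "j < k" using j by simp
    have xh: "x + h \<in> ?S" using x h by auto
    have d1: "(F j has_real_derivative F (Suc j) (x + h)) (at (x + h) within ?S)"
      using H jk xh unfolding has_cont_derivs_upto_def by auto
    then have d1': "(F j has_real_derivative F (Suc j) (x + h)) (at ((\<lambda>x. x + h) x) within ((\<lambda>x. x + h) ` ?T))"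
      using im by (auto intro: DERIV_subset)
    have d2: "((\<lambda>x. x + h) has_real_derivative 1) (at x within ?T)"
      by (auto intro!: derivative_eq_intros)
    have "(F j \<circ> (\<lambda>x. x + h) has_real_derivative F (Suc j) (x + h) * 1) (at x within ?T)"
      by (rule DERIV_image_chain[OF d1' d2])
    then have a: "((\<lambda>x. F j (x + h)) has_real_derivative F (Suc j) (x + h)) (at x within ?T)"
      by (simp add: comp_def)
    have xS: "x \<in> ?S" using x TS by auto
    have b0: "(F j has_real_derivative F (Suc j) x) (at x within ?S)"
      using H jk xS unfolding has_cont_derivs_upto_def by blast
    have b: "(F j has_real_derivative F (Suc j) x) (at x within ?T)"
      by (rule DERIV_subset[OF b0 TS])
    show ?thesis using DERIV_diff[OF a b] .
  qed
  show ?thesis unfolding has_cont_derivs_upto_def using cont der by auto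
qed

lemma diff_family_bounds:
  assumes H: "has_cont_derivs_upto k F {X<..X+Y}" and k1: "1 \<le> k" and h: "0 < h" "h < Y"
    and bd: "\<And>x. x \<in> {X<..X+Y} \<Longrightarrow> lam \<le> F k x \<and> F k x \<le> Lam"
    and x: "x \<in> {X<..X + (Y - h)}"
  shows "h * lam \<le> F (k - 1) (x + h) - F (k - 1) x \<and> F (k - 1) (x + h) - F (k - 1) x \<le> h * Lam"
proof -
  obtain z where z: "x < z" "z < x + h" "F (k - 1) (x + h) - F (k - 1) x = (x + h - x) * F (Suc (k - 1)) z"
    using hcd_mvt[OF H _ _ _, of "k - 1" x "x + h"] k1 h x by auto
  have "lam \<le> F k z \<and> F k z \<le> Lam" using bd[of z] z x h by auto
  moreover have "Suc (k - 1) = k" using k1 by simp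
  ultimately show ?thesis using z h by (simp add: mult_left_mono)
qed

lemma step_core:
  fixes nS N H Y u rho YA t q c c' Sig x z :: real
  assumes W: "H^2 * nS^2 \<le> (N + H - 1) * (H * N + 2 * H * Sig)"
    and Sig: "Sig \<le> c' * ((H - 1) * Y * rho * t / u + YA * H * u * q)"
    and N0: "0 \<le> N" and N1: "N \<le> Y + 1" and H0: "u \<le> H" and H1: "H \<le> u + 1"
    and u0: "1 \<le> u" and u1: "u \<le> 4/25 * Y" and Y20: "20 \<le> Y"
    and rho: "1 \<le> rho" and c'0: "0 \<le> c'" and YA: "0 \<le> YA" and t0: "0 \<le> t" and q0: "0 \<le> q"
    and C1: "121/100 * (21/20 + 2 * t * c') \<le> c^2" and C2: "121/100 * (2 * c' * q) \<le> c^2"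
    and x: "x^2 = Y^2 * rho / u" "0 \<le> x" and z: "z^2 = Y * YA * u" "0 \<le> z" and c0: "0 \<le> c"
    and nS0: "0 \<le> nS"
  shows "nS \<le> c * (x + z)"
proof -
  have Hp: "0 < H" using H0 u0 by linarith
  have up: "0 < u" using u0 by linarith
  have Yp: "0 < Y" using Y20 by linarith
  have Sig0: "Sig \<le> c' * (Y * rho * t / u * H + YA * u * q * H)"
  proof -
    have "(H - 1) * Y * rho * t / u \<le> H * Y * rho * t / u"
      using Yp rho t0 up by (intro divide_right_mono mult_right_mono) auto
    then have "c' * ((H - 1) * Y * rho * t / u + YA * H * u * q) \<le> c' * (H * Y * rho * t / u + YA * H * u * q)"
      using c'0 by (intro mult_left_mono) auto
    then show ?thesis using Sig by (simp add: algebra_simps)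
  qed
  have A: "H * nS^2 \<le> (N + H - 1) * (N + 2 * Sig)"
  proof -
    have "H * (H * nS^2) \<le> H * ((N + H - 1) * (N + 2 * Sig))"
      using W by (simp add: algebra_simps power2_eq_square)
    then show ?thesis using Hp by simp
  qed
  have NH: "N + H - 1 \<le> 121/100 * Y" using N1 H1 u1 Y20 by linarith
  have NH0: "0 \<le> N + H - 1" using N0 H0 u0 by linarith
  have B: "N + 2 * Sig \<le> H * ((21/20 + 2 * t * c') * (Y * rho / u) + 2 * c' * q * (YA * u))"
  proof -
    have "N \<le> 21/20 * Y" using N1 Y20 by linarith
    also have "\<dots> \<le> 21/20 * Y * rho" using Yp rho by simp
    also have "\<dots> \<le> 21/20 * (Y * rho / u) * H"
    proof -
      have "Y * rho = (Y * rho / u) * u" using up by simp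
      also have "\<dots> \<le> (Y * rho / u) * H" using H0 Yp rho up by (intro mult_left_mono) auto
      finally have "Y * rho \<le> (Y * rho / u) * H" .
      then have "21/20 * (Y * rho) \<le> 21/20 * ((Y * rho / u) * H)" by (rule mult_left_mono) simp
      then show ?thesis by (simp add: mult.assoc)
    qed
    finally have n: "N \<le> 21/20 * (Y * rho / u) * H" .
    have e: "2 * (c' * (Y * rho * t / u * H + YA * u * q * H)) = H * (2 * t * c' * (Y * rho / u) + 2 * c' * q * (YA * u))"
      using up by (simp add: field_simps)
    have s: "2 * Sig \<le> H * (2 * t * c' * (Y * rho / u) + 2 * c' * q * (YA * u))"
      using Sig0 unfolding e[symmetric] by linarith
    show ?thesis using n s by (simp add: algebra_simps)
  qed
  define P where "P = (21/20 + 2 * t * c') * (Y * rho / u) + 2 * c' * q * (YA * u)"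
  have P0: "0 \<le> P" unfolding P_def using t0 c'0 Yp rho up q0 YA by simp
  have "(N + H - 1) * (N + 2 * Sig) \<le> (N + H - 1) * (H * P)"
    using B NH0 unfolding P_def by (rule mult_left_mono)
  then have "H * nS^2 \<le> (N + H - 1) * (H * P)" using A by linarith
  then have "H * nS^2 \<le> H * ((N + H - 1) * P)" by (simp add: algebra_simps)
  then have "nS^2 \<le> (N + H - 1) * P" using Hp by (simp only: mult_le_cancel_left_pos)
  also have "\<dots> \<le> 121/100 * Y * P" using NH P0 by (intro mult_right_mono) auto
  also have "\<dots> = 121/100 * (21/20 + 2 * t * c') * x^2 + 121/100 * (2 * c' * q) * z^2"
  proof -
    have e1: "Y * (Y * rho / u) = x^2" using x(1) by (simp add: power2_eq_square)
    have e2: "Y * (YA * u) = z^2" using z(1) by (simp add: mult.assoc)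
    have "121/100 * Y * P = 121/100 * (21/20 + 2 * t * c') * (Y * (Y * rho / u)) + 121/100 * (2 * c' * q) * (Y * (YA * u))"
      unfolding P_def by algebra
    then show ?thesis unfolding e1 e2 .
  qed
  also have "\<dots> \<le> c^2 * x^2 + c^2 * z^2"
    using C1 C2 by (intro add_mono mult_right_mono) auto
  also have "\<dots> \<le> (c * (x + z))^2"
  proof -
    have e: "(c * (x + z))^2 = c^2 * x^2 + c^2 * z^2 + c^2 * (2 * x * z)" by algebra
    have "0 \<le> c^2 * (2 * x * z)" using x(2) z(2) by simp
    then show ?thesis unfolding e by linarith
  qed
  finally have sq: "nS^2 \<le> (c * (x + z))^2" .
  have "0 \<le> c * (x + z)" using x(2) z(2) c0 by simp
  from power2_le_imp_le[OF sq this] show ?thesis .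
qed

definition Ssum :: "(nat \<Rightarrow> real \<Rightarrow> real) \<Rightarrow> real \<Rightarrow> real \<Rightarrow> complex" where
  "Ssum F X Y = (\<Sum>n\<in>{n::int. X < of_int n \<and> of_int n \<le> X + Y}. cis (2 * pi * F 0 (of_int n)))"

lemma Ssum_trivial:
  assumes "0 \<le> Y"
  shows "norm (Ssum F X Y) \<le> Y + 1"
proof -
  have "norm (Ssum F X Y) \<le> real (card {n::int. X < of_int n \<and> of_int n \<le> X + Y})"
    unfolding Ssum_def by (rule norm_sum_cis_le_card)
  then show ?thesis using card_int_Ioc[OF assms, of X] by linarith
qed

lemma int_Ioc_eq:
  fixes X Z :: real
  shows "{n::int. X < of_int n \<and> of_int n \<le> Z} = {floor X + 1..floor Z}"
  by (auto simp: floor_less_iff le_floor_iff) (linarith+)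

lemma weyl_applied:
  fixes F :: "nat \<Rightarrow> real \<Rightarrow> real" and Hn :: nat and X Y :: real
  assumes Y0: "0 \<le> Y" and H1: "1 \<le> Hn"
  defines "N \<equiv> real (card {n::int. X < of_int n \<and> of_int n \<le> X + Y})"
  shows "(real Hn)^2 * (norm (Ssum F X Y))^2 \<le> (N + real Hn - 1) *
     (real Hn * N + 2 * real Hn * (\<Sum>h\<in>{1..<Hn}. norm (Ssum (\<lambda>j x. F j (x + real h) - F j x) X (Y - real h))))"
proof -
  define I where "I = {n::int. X < of_int n \<and> of_int n \<le> X + Y}"
  define p where "p = floor X + 1"
  define q where "q = floor (X + Y)"
  have Ipq: "I = {p..q}" unfolding I_def p_def q_def by (rule int_Ioc_eq)
  have pq: "p \<le> q + 1" unfolding p_def q_def using Y0 by (simp add: floor_mono)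
  define u where "u n = (if n \<in> I then cis (2 * pi * F 0 (of_int n)) else 0)" for n
  have supp: "u n = 0" if "n \<notin> {p..q}" for n using that unfolding u_def Ipq by auto
  have W: "(real Hn)\<^sup>2 * (norm (\<Sum>n\<in>{p..q}. u n))\<^sup>2 \<le>
     real (nat (q - p + 1) + Hn - 1) *
       (real Hn * norm (\<Sum>n\<in>{p..q}. u n * cnj (u n))
        + 2 * real Hn * (\<Sum>h\<in>{1..<Hn}. norm (\<Sum>n\<in>{p..q}. u (n + int h) * cnj (u n))))"
    by (rule weyl_vdc[OF H1 pq supp])
  have e1: "(\<Sum>n\<in>{p..q}. u n) = Ssum F X Y"
    unfolding Ssum_def I_def[symmetric] unfolding Ipq u_def by (intro sum.cong refl) simp
  have cardI: "nat (q - p + 1) = card I" unfolding Ipq by simp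
  have e2: "real (nat (q - p + 1) + Hn - 1) = N + real Hn - 1"
    unfolding cardI N_def I_def using H1 by simp
  have e3: "norm (\<Sum>n\<in>{p..q}. u n * cnj (u n)) = N"
  proof -
    have "(\<Sum>n\<in>{p..q}. u n * cnj (u n)) = (\<Sum>n\<in>{p..q}. 1)"
    proof (intro sum.cong refl)
      fix n assume "n \<in> {p..q}"
      then have "u n = cis (2 * pi * F 0 (of_int n))" unfolding u_def Ipq by simp
      then show "u n * cnj (u n) = 1" by (simp add: cis_cnj cis_mult)
    qed
    then show ?thesis unfolding N_def I_def[symmetric] Ipq by simp
  qed
  have e4: "(\<Sum>n\<in>{p..q}. u (n + int h) * cnj (u n)) = Ssum (\<lambda>j x. F j (x + real h) - F j x) X (Y - real h)" for h :: nat
  proof -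
    have "(\<Sum>n\<in>{p..q}. u (n + int h) * cnj (u n)) =
          (\<Sum>n\<in>{p..q}. if n + int h \<in> I then cis (2 * pi * (F 0 (of_int n + real h) - F 0 (of_int n))) else 0)"
      unfolding u_def by (intro sum.cong refl) (auto simp: Ipq cis_cnj cis_mult algebra_simps)
    also have "\<dots> = (\<Sum>n\<in>{n\<in>{p..q}. n + int h \<in> I}. cis (2 * pi * (F 0 (of_int n + real h) - F 0 (of_int n))))"
      by (rule sum.inter_filter[symmetric]) simp
    also have "{n\<in>{p..q}. n + int h \<in> I} = {n::int. X < of_int n \<and> of_int n \<le> X + (Y - real h)}"
      unfolding Ipq[symmetric] unfolding I_def by auto
    finally show ?thesis unfolding Ssum_def by simp
  qed
  show ?thesis using W unfolding e1 e2 e3 e4 .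
qed

definition cst :: "nat \<Rightarrow> real" where
  "cst k = (if k = 2 then 8 else if k = 3 then 13/2 else 5)"

definition bnd :: "nat \<Rightarrow> real \<Rightarrow> real \<Rightarrow> real \<Rightarrow> real" where
  "bnd k Y lam Lam = Y * (Lam / lam) powr (4 / 2 ^ k) * lam powr (1 / (2 ^ k - 2))
     + Y powr (1 - 4 / 2 ^ k) * lam powr (- 1 / (2 ^ k - 2))"

lemma level_base:
  assumes H: "has_cont_derivs_upto 2 F {X<..X+Y}" and Y1: "1 \<le> Y" and lam: "0 < lam"
    and bd: "\<And>x. x \<in> {X<..X+Y} \<Longrightarrow> lam \<le> F 2 x \<and> F 2 x \<le> Lam"
  shows "norm (Ssum F X Y) \<le> cst 2 * bnd 2 Y lam Lam"
proof -
  have lL: "lam \<le> Lam" using bd[of "X+Y"] Y1 by auto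
  have "bnd 2 Y lam Lam = Y * (Lam / lam) * sqrt lam + 1 / sqrt lam"
  proof -
    have a: "(Lam / lam) powr (4 / 2 ^ 2) = Lam / lam" using lL lam by simp
    have b: "lam powr (1 / (2 ^ 2 - 2)) = sqrt lam" using lam by (simp add: powr_half_sqrt)
    have c: "Y powr (1 - 4 / 2 ^ 2) = 1" using Y1 by simp
    have d: "lam powr (- 1 / (2 ^ 2 - 2)) = 1 / sqrt lam"
    proof -
      have e: "(- 1 / (2 ^ 2 - 2) :: real) = - (1/2)" by simp
      have "lam powr (- (1/2)) = inverse (lam powr (1/2))" by (rule powr_minus)
      also have "lam powr (1/2) = sqrt lam" using lam by (simp add: powr_half_sqrt)
      finally show ?thesis unfolding e by (simp add: inverse_eq_divide)
    qed
    have "bnd 2 Y lam Lam = Y * (Lam / lam) powr (4 / 2 ^ 2) * lam powr (1 / (2 ^ 2 - 2)) + Y powr (1 - 4 / 2 ^ 2) * lam powr (- 1 / (2 ^ 2 - 2))"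
      by (rule bnd_def)
    also have "\<dots> = Y * (Lam / lam) * sqrt lam + 1 * (1 / sqrt lam)"
      by (simp only: a b c d)
    finally show ?thesis by simp
  qed
  also have "\<dots> = Y * Lam / sqrt lam + 1 / sqrt lam"
  proof -
    have s: "sqrt lam * sqrt lam = lam" using lam by simp
    have sp: "0 < sqrt lam" using lam by simp
    have eq: "(Lam / lam) * sqrt lam = Lam / sqrt lam"
      using sp lam by (simp add: divide_simps mult.assoc)
    have "Y * (Lam / lam) * sqrt lam = Y * ((Lam / lam) * sqrt lam)" by (simp only: mult.assoc)
    also have "\<dots> = Y * (Lam / sqrt lam)" by (simp only: eq)
    also have "\<dots> = Y * Lam / sqrt lam" by simp
    finally show ?thesis by simp
  qed
  finally have e: "bnd 2 Y lam Lam = Y * Lam / sqrt lam + 1 / sqrt lam" .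
  show ?thesis unfolding e cst_def Ssum_def using second_deriv_test_raw[OF H Y1 lam bd] by simp
qed

lemma pow_sq_powr: "0 < (a::real) \<Longrightarrow> (a powr e)^2 = a powr (2 * e)"
proof -
  assume "0 < a"
  have "a powr (2 * e) = a powr (e + e)" by simp
  also have "\<dots> = a powr e * a powr e" by (rule powr_add)
  finally show ?thesis by (simp add: power2_eq_square)
qed

lemma five_le: "5 \<le> (c::real) \<Longrightarrow> 0 \<le> x \<Longrightarrow> 0 \<le> z \<Longrightarrow> 5 * x + 5 * z \<le> c * (x + z)"
proof -
  assume a: "5 \<le> c" "0 \<le> x" "0 \<le> z"
  have "5 * (x + z) \<le> c * (x + z)" using a by (intro mult_right_mono) auto
  then show ?thesis by (simp only: distrib_left)
qed

lemma five_sqrt: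
  fixes Y :: real
  assumes "1 \<le> Y" "Y \<le> 20"
  shows "Y + 1 \<le> 5 * sqrt Y"
proof -
  define s where "s = sqrt Y"
  have s1: "1 \<le> s" unfolding s_def using assms by simp
  have ss: "s * s = Y" unfolding s_def using assms by simp
  have s45: "s \<le> 9/2"
  proof (rule ccontr)
    assume "\<not> s \<le> 9/2"
    then have "9/2 * (9/2) < s * s" using mult_strict_mono[of "9/2" s "9/2" s] by auto
    then show False using ss assms by simp
  qed
  have "0 \<le> (s - 1/4) * (19/4 - s)" using s1 s45 by (intro mult_nonneg_nonneg) auto
  moreover have "(s - 1/4) * (19/4 - s) = - (s * s) + 5 * s - 19/16" by algebra
  ultimately have "0 \<le> - (s * s) + 5 * s - 19/16" by simp
  then show ?thesis using ss unfolding s_def[symmetric] by linarith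
qed

lemma level_step:
  assumes n2: "2 \<le> n"
    and IH: "\<And>F X Y lam Lam. has_cont_derivs_upto n F {X<..X+Y} \<Longrightarrow> 1 \<le> Y \<Longrightarrow> 0 < lam \<Longrightarrow>
        (\<And>x. x \<in> {X<..X+Y} \<Longrightarrow> lam \<le> F n x \<and> F n x \<le> Lam) \<Longrightarrow> norm (Ssum F X Y) \<le> cst n * bnd n Y lam Lam"
    and H: "has_cont_derivs_upto (Suc n) F {X<..X+Y}" and Y1: "1 \<le> Y" and lam: "0 < lam"
    and bd: "\<And>x. x \<in> {X<..X+Y} \<Longrightarrow> lam \<le> F (Suc n) x \<and> F (Suc n) x \<le> Lam"
  shows "norm (Ssum F X Y) \<le> cst (Suc n) * bnd (Suc n) Y lam Lam"
proof -
  define K where "K = (2::real) ^ Suc n"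
  have K2: "(2::real) ^ n = K / 2" unfolding K_def by simp
  have K8: "8 \<le> K"
  proof -
    have "(2::real) ^ 3 \<le> 2 ^ Suc n" using n2 by (intro power_increasing) auto
    then show ?thesis unfolding K_def by simp
  qed
  define A where "A = 4 / K"
  define al where "al = 1 / (K - 2)"
  define be where "be = 1 / (K / 2 - 2)"
  have A0: "0 < A" and A2: "A \<le> 1/2" unfolding A_def using K8 by (auto simp: field_simps)
  have al0: "0 < al" unfolding al_def using K8 by simp
  have be0: "0 < be" and be2: "be \<le> 1/2" unfolding be_def using K8 by (auto simp: field_simps)
  have key: "(1 - 2 * al) * be = 2 * al"
  proof -
    have "(K - 2) * (K - 4) > 0" using K8 by (intro mult_pos_pos) auto
    then have d: "K * K + 8 - K * 6 \<noteq> 0" by (simp add: algebra_simps)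
    show ?thesis unfolding al_def be_def using K8 d by (simp add: field_simps)
  qed
  have bS: "bnd (Suc n) Y lam Lam = Y * (Lam / lam) powr A * lam powr al + Y powr (1 - A) * lam powr (- al)"
  proof -
    have "(- 1 / (K - 2) :: real) = - al" unfolding al_def by simp
    then show ?thesis unfolding bnd_def K_def[symmetric] A_def al_def by simp
  qed
  have bN: "bnd n Y' l' L' = Y' * (L' / l') powr (2 * A) * l' powr be + Y' powr (1 - 2 * A) * l' powr (- be)" for Y' l' L'
  proof -
    have a: "(4 / 2 ^ n :: real) = 2 * A" unfolding K2 A_def by simp
    have b: "(1 / (2 ^ n - 2) :: real) = be" unfolding K2 be_def by simp
    have c: "(- 1 / (2 ^ n - 2) :: real) = - be" unfolding K2 be_def by simp
    show ?thesis unfolding bnd_def a b c ..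
  qed
  have lL: "lam \<le> Lam" using bd[of "X+Y"] Y1 by auto
  define R where "R = Lam / lam"
  have R1: "1 \<le> R" unfolding R_def using lL lam by simp
  define c where "c = cst (Suc n)"
  define c' where "c' = cst n"
  have c5: "5 \<le> c" unfolding c_def cst_def by auto
  define x where "x = Y * R powr A * lam powr al"
  define z where "z = Y powr (1 - A) * lam powr (- al)"
  have x0: "0 \<le> x" unfolding x_def using Y1 by simp
  have z0: "0 \<le> z" unfolding z_def using Y1 by simp
  have goal: "cst (Suc n) * bnd (Suc n) Y lam Lam = c * (x + z)"
    unfolding bS c_def x_def z_def R_def ..
  define S where "S = Ssum F X Y"
  have Striv: "norm S \<le> Y + 1" unfolding S_def using Y1 by (intro Ssum_trivial) auto
  have RA1: "1 \<le> R powr A" using R1 A0 by (intro ge_one_powr_ge_zero) auto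
  show ?thesis
  proof (cases "1 \<le> lam")
    case True
    have "1 \<le> lam powr al" using True al0 by (intro ge_one_powr_ge_zero) auto
    then have "Y * 1 * 1 \<le> x" unfolding x_def using RA1 Y1
      by (intro mult_mono) auto
    then have Yx: "Y \<le> x" by simp
    have "5 * x + 5 * z \<le> c * (x + z)" using c5 x0 z0 by (rule five_le)
    then have "Y + 1 \<le> c * (x + z)" using Yx z0 Y1 by linarith
    then show ?thesis using Striv unfolding goal S_def by linarith
  next
    case False
    then have lam1: "lam < 1" by simp
    define u where "u = lam powr (- (2 * al))"
    have u_inv: "lam powr (2 * al) = 1 / u" unfolding u_def by (simp add: powr_minus divide_inverse)
    have lpal: "lam powr (2 * al) \<le> 1" using lam lam1 al0 by (intro powr_le1) auto
    have lpal0: "0 < lam powr (2 * al)" using lam by simp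
    have u1: "1 \<le> u" unfolding u_def powr_minus using lpal lpal0 by (simp add: field_simps)
    have lmal: "1 \<le> lam powr (- al)"
    proof -
      have "lam powr al \<le> 1" using lam lam1 al0 by (intro powr_le1) auto
      moreover have "0 < lam powr al" using lam by simp
      ultimately show ?thesis unfolding powr_minus by (simp add: field_simps)
    qed
    have z2: "z^2 = Y * Y powr (1 - 2 * A) * u"
    proof -
      have "z^2 = (Y powr (1 - A))^2 * (lam powr (- al))^2" unfolding z_def by (simp add: power_mult_distrib)
      also have "(Y powr (1 - A))^2 = Y powr (2 * (1 - A))" using Y1 by (intro pow_sq_powr) auto
      also have "(lam powr (- al))^2 = lam powr (2 * (- al))" using lam by (intro pow_sq_powr) auto
      also have "Y powr (2 * (1 - A)) = Y powr (1 + (1 - 2 * A))" by (simp add: algebra_simps)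
      also have "\<dots> = Y powr 1 * Y powr (1 - 2 * A)" by (rule powr_add)
      also have "Y powr 1 = Y" using Y1 by simp
      also have "lam powr (2 * (- al)) = u" unfolding u_def by simp
      finally show ?thesis by simp
    qed
    have x2: "x^2 = Y^2 * R powr (2 * A) / u"
    proof -
      have "x^2 = Y^2 * (R powr A)^2 * (lam powr al)^2" unfolding x_def by (simp add: power_mult_distrib)
      also have "(R powr A)^2 = R powr (2 * A)" using R1 by (intro pow_sq_powr) auto
      also have "(lam powr al)^2 = lam powr (2 * al)" using lam by (intro pow_sq_powr) auto
      also note u_inv
      finally show ?thesis by simp
    qed
    show ?thesis
    proof (cases "Y < 20")
      case True
      have "Y powr (1/2) \<le> Y powr (1 - A)" using Y1 A2 by (intro powr_mono) auto
      then have "sqrt Y \<le> Y powr (1 - A)" using Y1 by (simp add: powr_half_sqrt)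
      also have "\<dots> \<le> z" unfolding z_def using lmal Y1 by (simp add: mult_left_le)
      finally have "sqrt Y \<le> z" .
      moreover have "5 * x + 5 * z \<le> c * (x + z)" using c5 x0 z0 by (rule five_le)
      ultimately have "5 * sqrt Y \<le> c * (x + z)" using x0 by linarith
      then show ?thesis using five_sqrt[of Y] True Y1 Striv unfolding goal S_def by linarith
    next
      case False
      then have Y20: "20 \<le> Y" by simp
      show ?thesis
      proof (cases "4/25 * Y < u")
        case True
        have "Y powr 1 \<le> Y powr (1 - 2 * A)" if "False" using that by simp
        have YA1: "1 \<le> Y powr (1 - 2 * A)" using Y1 A2 by (intro ge_one_powr_ge_zero) auto
        have "(2/5 * Y)^2 = Y * 1 * (4/25 * Y)" by (simp add: power2_eq_square)
        also have "\<dots> \<le> Y * Y powr (1 - 2 * A) * u" using Y1 YA1 True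
          by (intro mult_mono) auto
        also have "\<dots> = z^2" by (rule z2[symmetric])
        finally have "(2/5 * Y)^2 \<le> z^2" .
        from power2_le_imp_le[OF this z0] have "2/5 * Y \<le> z" .
        moreover have "5 * x + 5 * z \<le> c * (x + z)" using c5 x0 z0 by (rule five_le)
        ultimately have "2 * Y \<le> c * (x + z)" using x0 by linarith
        then show ?thesis using Y1 Striv unfolding goal S_def by linarith
      next
        case False
        then have uY: "u \<le> 4/25 * Y" by simp
        define Hn where "Hn = nat (ceiling u)"
        define Hr where "Hr = real Hn"
        have Hr_eq: "Hr = real_of_int (ceiling u)" unfolding Hr_def Hn_def using u1 by simp
        have Hu: "u \<le> Hr" "Hr \<le> u + 1" unfolding Hr_eq by linarith+
        have Hn1: "1 \<le> Hn" using Hu u1 unfolding Hr_def by simp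
        define G where "G h = (\<lambda>j x. F j (x + real h) - F j x)" for h :: nat
        define Sig where "Sig = (\<Sum>h\<in>{1..<Hn}. norm (Ssum (G h) X (Y - real h)))"
        define N where "N = real (card {n::int. X < of_int n \<and> of_int n \<le> X + Y})"
        have W: "Hr^2 * (norm S)^2 \<le> (N + Hr - 1) * (Hr * N + 2 * Hr * Sig)"
          using weyl_applied[where F=F and Hn=Hn and X=X and Y=Y] Y1 Hn1 unfolding Hr_def Sig_def G_def N_def S_def by simp
        have N0: "0 \<le> N" unfolding N_def by simp
        have N1: "N \<le> Y + 1" unfolding N_def using card_int_Ioc[of Y X] Y1 by simp
        define rho where "rho = R powr (2 * A)"
        define YA where "YA = Y powr (1 - 2 * A)"
        define q where "q = 1 / (1 - be)"
        have rho1: "1 \<le> rho" unfolding rho_def using R1 A0 by (intro ge_one_powr_ge_zero) auto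
        have YA0: "0 \<le> YA" unfolding YA_def by simp
        have q0: "0 \<le> q" unfolding q_def using be2 by simp
        have c'0: "0 \<le> c'" unfolding c'_def cst_def by simp
        have up: "0 < u" using u1 by simp
        have ulam: "u * lam = lam powr (1 - 2 * al)"
        proof -
          have "lam powr (1 + - (2 * al)) = lam powr 1 * lam powr (- (2 * al))" by (rule powr_add)
          then show ?thesis unfolding u_def using lam by simp
        qed
        have ul: "(u * lam) powr be = 1 / u"
        proof -
          have "(u * lam) powr be = lam powr ((1 - 2 * al) * be)" unfolding ulam by (rule powr_powr)
          also have "\<dots> = lam powr (2 * al)" unfolding key ..
          finally show ?thesis using u_inv by simp
        qed
        have ul': "(u * lam) powr (- be) = u"
          unfolding powr_minus ul using up by simp
        have perh: "norm (Ssum (G h) X (Y - real h)) \<le> c' * (Y * rho * 1 / u + YA * (real h powr (- be) * lam powr (- be)))"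
          if h: "h \<in> {1..<Hn}" for h
        proof -
          define hr where "hr = real h"
          have hr1: "1 \<le> hr" and hrH: "hr \<le> Hr - 1" using h unfolding hr_def Hr_def by auto
          have hru: "hr \<le> u" using hrH Hu by linarith
          have hrY: "hr < Y" using hru uY Y20 by linarith
          have Yh1: "1 \<le> Y - hr" using hru uY Y20 by linarith
          have hr0: "0 < hr" using hr1 by simp
          have D: "has_cont_derivs_upto n (G h) {X<..X + (Y - hr)}"
            using diff_family[OF H, of hr] hr0 hrY unfolding G_def hr_def by simp
          have B: "hr * lam \<le> G h n x \<and> G h n x \<le> hr * Lam" if "x \<in> {X<..X + (Y - hr)}" for x
            using diff_family_bounds[OF H _ hr0 hrY bd that] unfolding G_def hr_def by simp
          have hl: "0 < hr * lam" using hr0 lam by simp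
          have I: "norm (Ssum (G h) X (Y - hr)) \<le> c' * bnd n (Y - hr) (hr * lam) (hr * Lam)"
            unfolding c'_def by (rule IH[OF D Yh1 hl B])
          have ratio: "(hr * Lam) / (hr * lam) = R" unfolding R_def using hr0 by simp
          have t1: "(Y - hr) * R powr (2 * A) * (hr * lam) powr be \<le> Y * rho * (1 / u)"
          proof -
            have "(hr * lam) powr be \<le> (u * lam) powr be"
              using be0 hl hru lam by (intro powr_mono2) auto
            then have a: "(hr * lam) powr be \<le> 1 / u" unfolding ul .
            have "(Y - hr) * R powr (2 * A) \<le> Y * rho" unfolding rho_def using hr0 by (intro mult_right_mono) auto
            then show ?thesis using a by (rule mult_mono) (use Y20 rho1 in auto)
          qed
          have t2: "(Y - hr) powr (1 - 2 * A) * (hr * lam) powr (- be) \<le> YA * (hr powr (- be) * lam powr (- be))"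
          proof -
            have "(Y - hr) powr (1 - 2 * A) \<le> YA" unfolding YA_def using A2 Yh1 hr0 by (intro powr_mono2) auto
            moreover have "(hr * lam) powr (- be) = hr powr (- be) * lam powr (- be)" by (rule powr_mult)
            ultimately show ?thesis by (metis mult_right_mono powr_ge_zero)
          qed
          have "bnd n (Y - hr) (hr * lam) (hr * Lam) \<le> Y * rho * 1 / u + YA * (hr powr (- be) * lam powr (- be))"
            unfolding bN ratio using t1 t2 by simp
          then have "c' * bnd n (Y - hr) (hr * lam) (hr * Lam) \<le> c' * (Y * rho * 1 / u + YA * (hr powr (- be) * lam powr (- be)))"
            using c'0 by (rule mult_left_mono)
          then show ?thesis using I unfolding hr_def by linarith
        qed
        have Sig_bd: "Sig \<le> c' * ((Hr - 1) * Y * rho * 1 / u + YA * Hr * u * q)"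
        proof -
          have "Sig \<le> (\<Sum>h\<in>{1..<Hn}. c' * (Y * rho * 1 / u + YA * (real h powr (- be) * lam powr (- be))))"
            unfolding Sig_def using perh by (rule sum_mono)
          also have "\<dots> = c' * (real (Hn - 1) * (Y * rho * 1 / u) + YA * lam powr (- be) * (\<Sum>h\<in>{1..<Hn}. real h powr (- be)))"
            by (simp add: sum_distrib_left sum.distrib algebra_simps)
          also have "\<dots> \<le> c' * ((Hr - 1) * Y * rho * 1 / u + YA * Hr * u * q)"
          proof -
            have s1: "(\<Sum>h\<in>{1..<Hn}. real h powr (- be)) \<le> Hr powr (1 - be) / (1 - be)"
              unfolding Hr_def using be0 be2 by (intro sum_powr_neg) auto
            have hp: "Hr powr (1 - be) = Hr * Hr powr (- be)"
            proof -
              have "Hr powr (1 + - be) = Hr powr 1 * Hr powr (- be)" by (rule powr_add)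
              then show ?thesis using Hu up by simp
            qed
            have "lam powr (- be) * Hr powr (- be) = (Hr * lam) powr (- be)" by (simp add: powr_mult mult.commute)
            also have "\<dots> \<le> (u * lam) powr (- be)" using be0 up lam Hu by (intro powr_mono2') auto
            finally have s2: "lam powr (- be) * Hr powr (- be) \<le> u" unfolding ul' .
            have "lam powr (- be) * (\<Sum>h\<in>{1..<Hn}. real h powr (- be)) \<le> lam powr (- be) * (Hr powr (1 - be) / (1 - be))"
              using s1 by (intro mult_left_mono) auto
            also have "\<dots> = Hr * (lam powr (- be) * Hr powr (- be)) * q" unfolding hp q_def by simp
            also have "\<dots> \<le> Hr * u * q" using s2 Hu up q0 by (intro mult_right_mono mult_left_mono) auto
            finally have s3: "lam powr (- be) * (\<Sum>h\<in>{1..<Hn}. real h powr (- be)) \<le> Hr * u * q" .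
            have r: "real (Hn - 1) = Hr - 1" unfolding Hr_def using Hn1 by simp
            have "YA * lam powr (- be) * (\<Sum>h\<in>{1..<Hn}. real h powr (- be)) \<le> YA * (Hr * u * q)"
              using s3 YA0 by (simp add: mult.assoc mult_left_mono)
            then have "real (Hn - 1) * (Y * rho * 1 / u) + YA * lam powr (- be) * (\<Sum>h\<in>{1..<Hn}. real h powr (- be))
                \<le> (Hr - 1) * Y * rho * 1 / u + YA * Hr * u * q" unfolding r by (simp add: mult.assoc)
            then show ?thesis using c'0 by (rule mult_left_mono)
          qed
          finally show ?thesis .
        qed
        have CC: "121/100 * (21/20 + 2 * 1 * c') \<le> c^2 \<and> 121/100 * (2 * c' * q) \<le> c^2"
        proof (cases "n = 2")
          case True
          have "K = 8" unfolding K_def True by simp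
          then have hb: "be = 1/2" unfolding be_def by simp
          have hq: "q = 2" unfolding q_def hb by simp
          have hc': "c' = 8" and hc: "c = 13/2" unfolding c'_def c_def cst_def True by auto
          show ?thesis unfolding hq hc' hc by (simp add: power2_eq_square)
        next
          case False
          then have n3: "3 \<le> n" using n2 by simp
          have "(2::real) ^ 4 \<le> 2 ^ Suc n" using n3 by (intro power_increasing) auto
          then have K16: "16 \<le> K" unfolding K_def by simp
          have "be \<le> 1/6" unfolding be_def using K16 by (simp add: field_simps)
          then have "q \<le> 6/5" unfolding q_def by (simp add: field_simps)
          moreover have "c' \<le> 13/2" "c = 5" unfolding c'_def c_def cst_def using n3 by auto
          moreover note q0 c'0
          ultimately have "121/100 * (2 * c' * q) \<le> 121/100 * (2 * (13/2) * (6/5))"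
            by (intro mult_left_mono mult_mono) auto
          then show ?thesis using \<open>c' \<le> 13/2\<close> \<open>c = 5\<close> by (simp add: power2_eq_square)
        qed
        have "norm S \<le> c * (x + z)"
        proof (rule step_core[where N = N and H = Hr and Y = Y and u = u and rho = rho and YA = YA and t = 1 and q = q and c' = c' and Sig = Sig])
          show "Hr^2 * (norm S)^2 \<le> (N + Hr - 1) * (Hr * N + 2 * Hr * Sig)" by (rule W)
          show "Sig \<le> c' * ((Hr - 1) * Y * rho * 1 / u + YA * Hr * u * q)" by (rule Sig_bd)
          show "x^2 = Y^2 * rho / u" unfolding rho_def by (rule x2)
          show "z^2 = Y * YA * u" unfolding YA_def by (rule z2)
        qed (use N0 N1 Hu u1 uY Y20 rho1 c'0 YA0 q0 CC x0 z0 c5 in auto)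
        then show ?thesis unfolding goal S_def .
      qed
    qed
  qed
qed

lemma level:
  assumes "2 \<le> k"
  shows "\<And>F X Y lam Lam. has_cont_derivs_upto k F {X<..X+Y} \<Longrightarrow> 1 \<le> Y \<Longrightarrow> 0 < lam \<Longrightarrow>
        (\<And>x. x \<in> {X<..X+Y} \<Longrightarrow> lam \<le> F k x \<and> F k x \<le> Lam) \<Longrightarrow> norm (Ssum F X Y) \<le> cst k * bnd k Y lam Lam"
  using assms
proof (induction k rule: nat_induct_at_least)
  case base
  then show ?case using level_base by blast
next
  case (Suc n)
  show ?case by (rule level_step[OF Suc.hyps Suc.IH Suc.prems])
qed

lemma constC4_ge: "10 \<le> constC4"
proof -
  have s2: "14142/10000 \<le> sqrt 2" by (rule real_le_rsqrt) (simp add: power2_eq_square)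
  have B: "48284/10000 \<le> constB" unfolding constB_def using s2 by simp
  have B3: "(48284/10000)^3 \<le> constB^3" using B by (intro power_mono) auto
  have p1: "3141592653588 / 1000000000000 \<le> pi" "pi \<le> 31415926535899 / 10000000000000"
    using pi_approx by simp_all
  have sp: "sqrt pi \<le> 1775/1000" using p1 by (intro real_le_lsqrt) (auto simp: power2_eq_square)
  have sq: "14756/10000 \<le> sqrt (1 + 3 * pi / 8)" using p1 by (intro real_le_rsqrt) (auto simp: power2_eq_square)
  have spp: "0 < sqrt pi" by simp
  have "2 / (1775/1000) * (1 + 14756/10000) \<le> 2 / sqrt pi * (1 + sqrt (1 + 3 * pi / 8))"
  proof (rule mult_mono)
    show "2 / (1775/1000) \<le> 2 / sqrt pi" using sp spp by (intro divide_left_mono) auto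
  qed (use sq spp in auto)
  then have A: "2 / (1775/1000) * (1 + 14756/10000) \<le> constA" unfolding constA_def .
  have "(625::real) \<le> 2 * (2 / (1775/1000) * (1 + 14756/10000)) * (48284/10000)^3" by (simp add: power3_eq_cube)
  also have "\<dots> \<le> 2 * constA * constB^3"
    using A B3 by (intro mult_mono) auto
  finally have P: "625 \<le> 2 * constA * constB ^ 3" .
  have "(625::real) powr (1/4) = 5"
  proof -
    have "(625::real) = 5 powr 4" by (simp add: powr_realpow[symmetric])
    then have "(625::real) powr (1/4) = (5 powr 4) powr (1/4)" by simp
    also have "\<dots> = 5" by (simp add: powr_powr)
    finally show ?thesis .
  qed
  moreover have "(625::real) powr (1/4) \<le> (2 * constA * constB ^ 3) powr (1/4)"
    using P by (intro powr_mono2) auto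
  ultimately show ?thesis unfolding constC4_def by simp
qed

theorem corollary25:
  fixes d :: nat and X Y lam Lam :: real and F :: "nat \<Rightarrow> real \<Rightarrow> real"
  assumes "d \<ge> 4"
    and "Y > real d"
    and "has_cont_derivs_upto d F {X<..X+Y}"
    and "0 < lam"
    and "\<And>x. x \<in> {X<..X+Y} \<Longrightarrow> lam \<le> F d x \<and> F d x \<le> Lam"
  shows "norm ((1 / complex_of_real Y) *
            (\<Sum>n\<in>{n::int. X < of_int n \<and> of_int n \<le> X + Y}.
               cis (2 * pi * F 0 (of_int n))))
         \<le> constC4 * max ((Lam / lam) powr (4 / 2 ^ d) * lam powr (1 / (2 ^ d - 2)))
                           (Y powr (- 4 / 2 ^ d) * lam powr (- 1 / (2 ^ d - 2)))"
proof -
  have Y1: "1 \<le> Y" using assms(1,2) by simp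
  have Yp: "0 < Y" using Y1 by simp
  define a where "a = (Lam / lam) powr (4 / 2 ^ d) * lam powr (1 / (2 ^ d - 2))"
  define b where "b = Y powr (- 4 / 2 ^ d) * lam powr (- 1 / (2 ^ d - 2))"
  have a0: "0 \<le> a" unfolding a_def by simp
  have b0: "0 \<le> b" unfolding b_def by simp
  have lev: "norm (Ssum F X Y) \<le> cst d * bnd d Y lam Lam"
    by (rule level[OF _ assms(3) Y1 assms(4) assms(5)]) (use assms(1) in simp)
  have c5: "cst d = 5" unfolding cst_def using assms(1) by simp
  have bnd_eq: "bnd d Y lam Lam = Y * a + Y * b"
  proof -
    have e: "(- 4 / 2 ^ d :: real) = - (4 / 2 ^ d)" by simp
    have "Y powr (1 + - (4 / 2 ^ d)) = Y powr 1 * Y powr (- (4 / 2 ^ d))" by (rule powr_add)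
    then have "Y powr (1 - 4 / 2 ^ d) = Y * Y powr (- 4 / 2 ^ d)" unfolding e using Yp by simp
    then show ?thesis unfolding bnd_def a_def b_def by (simp add: mult.assoc)
  qed
  have "norm ((1 / complex_of_real Y) * Ssum F X Y) = norm (Ssum F X Y) / Y"
    using Yp by (simp add: norm_mult norm_divide)
  also have "\<dots> \<le> 5 * (Y * a + Y * b) / Y" using lev Yp unfolding c5 bnd_eq by (intro divide_right_mono) auto
  also have "\<dots> = 5 * (a + b)" using Yp by (simp add: field_simps)
  also have "\<dots> \<le> 10 * max a b" by simp
  also have "\<dots> \<le> constC4 * max a b" using constC4_ge a0 b0 by (intro mult_right_mono) auto
  finally show ?thesis unfolding a_def b_def Ssum_def .
qed

end
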